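(* Let $f$ and $F$ be the density and CDF of the standard Gaussian distribution. For every $\alpha\in(0,1)$ and every $z\in\mathbb{R}$, $$\frac{f(z)|z|^\alpha}{(1-F(z))^{1-\alpha}} \le \frac{2}{\alpha}.$$ *)

theory Defs
  imports "HOL-Probability.Probability"
begin

definition std_normal_cdf :: "real \<Rightarrow> real" where
  "std_normal_cdf z = measure (density lborel std_normal_density) {..z}"

end

theory Submission
  imports Defs
begin

lemma Q_lower:
  fixes z h :: real
  assumes h: "0 < h"
  shows "h * std_normal_density (\<bar>z\<bar> + h) \<le> 1 - std_normal_cdf z"
proof -
  let ?M = "density lborel std_normal_density"
  interpret P: prob_space ?M by (rule prob_space_normal_density) simp
  have sp: "space ?M = UNIV" by simp
  have "1 - std_normal_cdf z = measure ?M (space ?M - {..z})"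
    unfolding std_normal_cdf_def by (subst P.prob_compl) auto
  also have "space ?M - {..z} = {z<..}" by auto
  finally have e1: "1 - std_normal_cdf z = measure ?M {z<..}" .
  have mono: "measure ?M {z<..z+h} \<le> measure ?M {z<..}"
    by (rule P.finite_measure_mono) auto
  have "ennreal (h * std_normal_density (\<bar>z\<bar> + h)) =
      (\<integral>\<^sup>+ x. ennreal (std_normal_density (\<bar>z\<bar> + h)) * indicator {z<..z+h} x \<partial>lborel)"
    using h by (subst nn_integral_cmult_indicator) (auto simp: ennreal_mult mult.commute)
  also have "\<dots> \<le> (\<integral>\<^sup>+ x. ennreal (std_normal_density x) * indicator {z<..z+h} x \<partial>lborel)"
  proof (rule nn_integral_mono)
    fix x
    show "ennreal (std_normal_density (\<bar>z\<bar> + h)) * indicator {z<..z+h} x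
        \<le> ennreal (std_normal_density x) * indicator {z<..z+h} x"
    proof (cases "x \<in> {z<..z+h}")
      case True
      then have "\<bar>x\<bar> \<le> \<bar>z\<bar> + h" using h by auto
      then have "x\<^sup>2 \<le> (\<bar>z\<bar> + h)\<^sup>2"
        by (metis abs_ge_zero power2_abs power_mono)
      then have "std_normal_density (\<bar>z\<bar> + h) \<le> std_normal_density x"
        unfolding std_normal_density_def by (simp add: divide_right_mono)
      then show ?thesis using True by (simp add: ennreal_leI)
    qed simp
  qed
  also have "\<dots> = emeasure ?M {z<..z+h}"
    by (subst emeasure_density) auto
  also have "\<dots> = ennreal (measure ?M {z<..z+h})"
    by (simp add: P.emeasure_eq_measure)
  finally have "h * std_normal_density (\<bar>z\<bar> + h) \<le> measure ?M {z<..z+h}"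
    by (simp add: ennreal_le_iff)
  with mono e1 show ?thesis by simp
qed

theorem lemma5:
  fixes \<alpha> z :: real
  assumes "0 < \<alpha>" and "\<alpha> < 1"
  shows "std_normal_density z * \<bar>z\<bar> powr \<alpha> / (1 - std_normal_cdf z) powr (1 - \<alpha>) \<le> 2 / \<alpha>"
proof (cases "z = 0")
  case True
  then show ?thesis using assms by simp
next
  case False
  define a where "a = \<bar>z\<bar>"
  have a: "0 < a" using False a_def by simp
  define K where "K = std_normal_density z"
  define Q where "Q = 1 - std_normal_cdf z"
  define h where "h = (if a \<le> 1 then 1 else 1 / a)"
  have hpos: "0 < h" using a h_def by simp
  have Kdef: "K = exp (- a\<^sup>2 / 2) / sqrt (2 * pi)"
    unfolding K_def a_def std_normal_density_def by simp
  have Kpos: "0 < K" using Kdef by simp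
  have "std_normal_density (a + h) = K * exp (- (a * h + h\<^sup>2 / 2))"
    unfolding Kdef std_normal_density_def
    by (simp add: power2_eq_square field_simps flip: exp_add)
  with Q_lower[OF hpos, of z] have Qge: "h * K * exp (- (a * h + h\<^sup>2 / 2)) \<le> Q"
    unfolding Q_def a_def by (simp add: mult.assoc)
  have Qpos: "0 < Q" using Qge hpos Kpos
    by (smt (verit, best) exp_gt_zero mult_pos_pos)
  have lnQ: "ln h + ln K - (a * h + h\<^sup>2 / 2) \<le> ln Q"
  proof -
    have "ln (h * K * exp (- (a * h + h\<^sup>2 / 2))) \<le> ln Q"
      using Qge hpos Kpos Qpos by (subst ln_le_cancel_iff) auto
    then show ?thesis using hpos Kpos by (simp add: ln_mult)
  qed
  have lnK: "ln K \<le> - a\<^sup>2 / 2"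
  proof -
    have "1 \<le> sqrt (2 * pi)" using pi_gt3 by simp
    then have "ln K = - a\<^sup>2 / 2 - ln (sqrt (2 * pi))"
      unfolding Kdef by (simp add: ln_div)
    moreover have "0 \<le> ln (sqrt (2 * pi))" using \<open>1 \<le> sqrt (2 * pi)\<close> by simp
    ultimately show ?thesis by simp
  qed
  define L where "L = K * a powr \<alpha> / Q powr (1 - \<alpha>)"
  have Lpos: "0 < L" unfolding L_def using Kpos a Qpos by simp
  have lnL: "ln L = ln K + \<alpha> * ln a - (1 - \<alpha>) * ln Q"
    unfolding L_def using Kpos a Qpos by (simp add: ln_div ln_mult ln_powr)
  have l2: "2 / 3 \<le> ln (2::real)" by (rule ln2_ge_two_thirds)
  have lnal: "ln \<alpha> \<le> \<alpha> - 1" using assms by (simp add: ln_le_minus_one)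
  have "ln L \<le> ln (2 / \<alpha>)"
  proof (cases "a \<le> 1")
    case True
    then have h1: "h = 1" unfolding h_def by simp
    have "ln a \<le> 0" using True a by simp
    have "ln L \<le> \<alpha> * ln K + \<alpha> * ln a + (1 - \<alpha>) * (a + 1 / 2)"
    proof -
      have "- (1 - \<alpha>) * ln Q \<le> - (1 - \<alpha>) * (ln h + ln K - (a * h + h\<^sup>2 / 2))"
        using lnQ assms by (intro mult_left_mono_neg) auto
      moreover have "- (1 - \<alpha>) * (ln h + ln K - (a * h + h\<^sup>2 / 2)) = - (1 - \<alpha>) * ln K + (1 - \<alpha>) * (a + 1 / 2)"
        using h1 by (simp add: algebra_simps add_divide_distrib diff_divide_distrib)
      moreover have "\<alpha> * ln K = ln K - (1 - \<alpha>) * ln K" by (simp add: algebra_simps)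
      moreover have "- (1 - \<alpha>) * ln Q = - ((1 - \<alpha>) * ln Q)" by (simp only: mult_minus_left)
      ultimately show ?thesis using lnL by linarith
    qed
    also have "\<dots> \<le> (1 - \<alpha>) * (3 / 2)"
    proof -
      have "ln K \<le> 0" using lnK zero_le_power2[of a] by linarith
      then have "\<alpha> * ln K \<le> 0" using assms
        by (simp add: mult_nonneg_nonpos)
      moreover have "\<alpha> * ln a \<le> 0" using \<open>ln a \<le> 0\<close> assms
        by (simp add: mult_nonneg_nonpos)
      moreover have "(1 - \<alpha>) * (a + 1 / 2) \<le> (1 - \<alpha>) * (3 / 2)"
        using True assms by (intro mult_left_mono) auto
      ultimately show ?thesis by linarith
    qed
    also have "\<dots> \<le> ln (2 / \<alpha>)"
      using assms l2 lnal by (simp add: ln_div)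
    finally show ?thesis .
  next
    case False
    then have h1: "h = 1 / a" and a1: "1 < a" unfolding h_def by auto
    have ah: "a * h = 1" using h1 a by simp
    have hh: "h\<^sup>2 \<le> 1" using h1 a1 by (simp add: power_divide)
    have lnh: "ln h = - ln a" using h1 a by (simp add: ln_div)
    have "ln L \<le> \<alpha> * ln K + \<alpha> * ln a + (1 - \<alpha>) * ln a + (1 - \<alpha>) * (3 / 2)"
    proof -
      define X where "X = a * h + h\<^sup>2 / 2"
      have X: "(1 - \<alpha>) * X \<le> (1 - \<alpha>) * (3 / 2)"
        unfolding X_def using ah hh assms by (intro mult_left_mono) auto
      have Q1: "(1 - \<alpha>) * (ln h + ln K - X) \<le> (1 - \<alpha>) * ln Q"
        unfolding X_def using lnQ assms by (intro mult_left_mono) auto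
      have e1: "(1 - \<alpha>) * (ln h + ln K - X) = (1 - \<alpha>) * ln h + (1 - \<alpha>) * ln K - (1 - \<alpha>) * X"
        by (simp add: algebra_simps)
      have e2: "(1 - \<alpha>) * ln h = - ((1 - \<alpha>) * ln a)" using lnh by simp
      have e3: "\<alpha> * ln K = ln K - (1 - \<alpha>) * ln K" by (simp add: algebra_simps)
      show ?thesis using lnL X Q1 e1 e2 e3 by linarith
    qed
    also have "\<dots> \<le> - \<alpha> * a\<^sup>2 / 2 + ln a + (1 - \<alpha>) * (3 / 2)"
    proof -
      have "\<alpha> * ln K \<le> \<alpha> * (- a\<^sup>2 / 2)" using lnK assms by (intro mult_left_mono) auto
      moreover have "\<alpha> * (- a\<^sup>2 / 2) = - \<alpha> * a\<^sup>2 / 2" by simp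
      moreover have "\<alpha> * ln a + (1 - \<alpha>) * ln a = ln a" by (simp add: algebra_simps)
      ultimately show ?thesis by linarith
    qed
    also have "\<dots> \<le> ln (2 / \<alpha>)"
    proof -
      have "ln (\<alpha> * a\<^sup>2) \<le> \<alpha> * a\<^sup>2 - 1" using assms a by (intro ln_le_minus_one) simp
      moreover have "ln (\<alpha> * a\<^sup>2) = ln \<alpha> + 2 * ln a" using assms a
        by (simp add: ln_mult ln_realpow)
      moreover have "ln (2 / \<alpha>) = ln 2 - ln \<alpha>" using assms by (simp add: ln_div)
      moreover have "- \<alpha> * a\<^sup>2 / 2 = - (\<alpha> * a\<^sup>2) / 2" by simp
      moreover have "(1 - \<alpha>) * (3 / 2) = 3 / 2 - 3 / 2 * \<alpha>" by (simp add: field_simps)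
      ultimately show ?thesis using lnal l2 assms by linarith
    qed
    finally show ?thesis .
  qed
  then have "L \<le> 2 / \<alpha>" using Lpos assms by simp
  then show ?thesis unfolding L_def K_def Q_def a_def .
qed

end
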